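(* Let $f:X\to Y$ be a continuous surjection between topological spaces and let $\mathcal B$ be a $\pi$-base for $Y$ (consisting of non-empty open sets). Then the family $\{f^{-1}(V):V\in\mathcal B\}$ is a skeletal family if and only if $f$ is a skeletal map.
   Context: A continuous surjection $f:X\to Y$ is skeletal if for every non-empty open $U\subseteq X$ the closure of $f[U]$ has non-empty interior. A family $\mathcal P$ of open subsets of $X$ is a skeletal family if for every non-empty open $V\subseteq X$ there exists $W\in\mathcal P$ such that every non-empty $U\in\mathcal P$ with $U\subseteq W$ satisfies $U\cap V\neq\emptyset$. *)

theory Defs
  imports "HOL-Analysis.Analysis"
begin

definition skeletal_map :: "'a topology \<Rightarrow> 'b topology \<Rightarrow> ('a \<Rightarrow> 'b) \<Rightarrow> bool" where
  "skeletal_map X Y f \<longleftrightarrow>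
     continuous_map X Y f \<and> f ` topspace X = topspace Y \<and>
     (\<forall>U. openin X U \<and> U \<noteq> {} \<longrightarrow> Y interior_of (Y closure_of (f ` U)) \<noteq> {})"

definition skeletal_family :: "'a topology \<Rightarrow> 'a set set \<Rightarrow> bool" where
  "skeletal_family X P \<longleftrightarrow>
     (\<forall>U\<in>P. openin X U) \<and>
     (\<forall>V. openin X V \<and> V \<noteq> {} \<longrightarrow>
        (\<exists>W\<in>P. \<forall>U\<in>P. U \<noteq> {} \<and> U \<subseteq> W \<longrightarrow> U \<inter> V \<noteq> {}))"

definition pi_base :: "'b topology \<Rightarrow> 'b set set \<Rightarrow> bool" where
  "pi_base Y B \<longleftrightarrow>
     (\<forall>V\<in>B. openin Y V \<and> V \<noteq> {}) \<and>
     (\<forall>G. openin Y G \<and> G \<noteq> {} \<longrightarrow> (\<exists>V\<in>B. V \<subseteq> G))"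

end

theory Submission
  imports Defs
begin

theorem proposition2:
  fixes X :: "'a topology" and Y :: "'b topology" and f :: "'a \<Rightarrow> 'b" and B :: "'b set set"
  assumes "continuous_map X Y f"
    and "f ` topspace X = topspace Y"
    and "pi_base Y B"
  shows "skeletal_family X ((\<lambda>V. {x \<in> topspace X. f x \<in> V}) ` B) \<longleftrightarrow> skeletal_map X Y f"
proof
  have cont: "continuous_map X Y f" and surj: "f ` topspace X = topspace Y" using assms by auto
  have Bop: "\<And>V. V \<in> B \<Longrightarrow> openin Y V \<and> V \<noteq> {}" using assms(3) by (auto simp: pi_base_def)
  have Bpi: "\<And>G. openin Y G \<Longrightarrow> G \<noteq> {} \<Longrightarrow> \<exists>V\<in>B. V \<subseteq> G" using assms(3) by (auto simp: pi_base_def)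
  have pre_ne: "{x \<in> topspace X. f x \<in> V} \<noteq> {}" if VB: "V \<in> B" for V
  proof -
    obtain y where "y \<in> V" using Bop[OF VB] by auto
    moreover have "V \<subseteq> topspace Y" using Bop[OF VB] openin_subset by blast
    ultimately show ?thesis using surj by force
  qed
  {
    assume sk: "skeletal_family X ((\<lambda>V. {x \<in> topspace X. f x \<in> V}) ` B)"
    show "skeletal_map X Y f" unfolding skeletal_map_def
    proof (intro conjI[OF cont conjI[OF surj]] allI impI)
      fix U assume U: "openin X U \<and> U \<noteq> {}"
      show "Y interior_of (Y closure_of (f ` U)) \<noteq> {}"
      proof
        assume emp: "Y interior_of (Y closure_of (f ` U)) = {}"
        have "\<forall>V. openin X V \<and> V \<noteq> {} \<longrightarrow>
          (\<exists>W\<in>(\<lambda>V. {x \<in> topspace X. f x \<in> V}) ` B. \<forall>U'\<in>(\<lambda>V. {x \<in> topspace X. f x \<in> V}) ` B.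
             U' \<noteq> {} \<and> U' \<subseteq> W \<longrightarrow> U' \<inter> V \<noteq> {})"
          using sk unfolding skeletal_family_def by (rule conjunct2)
        then have "\<exists>W\<in>(\<lambda>V. {x \<in> topspace X. f x \<in> V}) ` B. \<forall>U'\<in>(\<lambda>V. {x \<in> topspace X. f x \<in> V}) ` B.
             U' \<noteq> {} \<and> U' \<subseteq> W \<longrightarrow> U' \<inter> U \<noteq> {}"
          using U by (metis (no_types, lifting))
        then obtain W where Wm: "W \<in> (\<lambda>V. {x \<in> topspace X. f x \<in> V}) ` B"
          and W0: "\<forall>U'\<in>(\<lambda>V. {x \<in> topspace X. f x \<in> V}) ` B.
             U' \<noteq> {} \<and> U' \<subseteq> W \<longrightarrow> U' \<inter> U \<noteq> {}" by (rule bexE)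
        from Wm obtain V0 where V0: "V0 \<in> B" and WV: "W = {x \<in> topspace X. f x \<in> V0}" by (rule imageE)
        note W = W0[unfolded WV]
        have opG: "openin Y (V0 - Y closure_of (f ` U))"
          using Bop[OF V0] by (simp add: openin_diff)
        have "V0 - Y closure_of (f ` U) \<noteq> {}"
        proof
          assume "V0 - Y closure_of (f ` U) = {}"
          then have "V0 \<subseteq> Y closure_of (f ` U)" by (simp only: Diff_eq_empty_iff)
          moreover have "openin Y V0" using Bop[OF V0] by (rule conjunct1)
          ultimately have "V0 \<subseteq> Y interior_of (Y closure_of (f ` U))"
            by (rule interior_of_maximal)
          then have "V0 = {}" using emp by (simp only: subset_empty)
          then show False using Bop[OF V0] by simp
        qed
        then obtain V' where V': "V' \<in> B" "V' \<subseteq> V0 - Y closure_of (f ` U)"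
          using Bpi opG by blast
        have m: "{x \<in> topspace X. f x \<in> V'} \<in> (\<lambda>V. {x \<in> topspace X. f x \<in> V}) ` B"
          using V'(1) by (rule imageI)
        have ss: "{x \<in> topspace X. f x \<in> V'} \<subseteq> {x \<in> topspace X. f x \<in> V0}"
          using V'(2) by auto
        have "{x \<in> topspace X. f x \<in> V'} \<inter> U \<noteq> {}"
          using W[rule_format, OF m] ss pre_ne[OF V'(1)] by simp
        then obtain x where "x \<in> U" "f x \<in> V'" by auto
        moreover have "f ` U \<subseteq> Y closure_of (f ` U)"
        proof (rule closure_of_subset)
          have "U \<subseteq> topspace X" using U openin_subset by blast
          then have "f ` U \<subseteq> f ` topspace X" by (rule image_mono)
          then show "f ` U \<subseteq> topspace Y" using surj by simp
        qed
        ultimately show False using V' by blast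
      qed
    qed
  }
  {
    assume sm: "skeletal_map X Y f"
    show "skeletal_family X ((\<lambda>V. {x \<in> topspace X. f x \<in> V}) ` B)"
      unfolding skeletal_family_def
    proof (intro conjI ballI allI impI)
      fix U assume "U \<in> (\<lambda>V. {x \<in> topspace X. f x \<in> V}) ` B"
      then show "openin X U" using Bop cont continuous_map_def by fastforce
    next
      fix V assume V: "openin X V \<and> V \<noteq> {}"
      let ?G = "Y interior_of (Y closure_of (f ` V))"
      have "?G \<noteq> {}" using sm V unfolding skeletal_map_def by blast
      then have "\<exists>V\<in>B. V \<subseteq> ?G" by (rule Bpi[OF openin_interior_of])
      then obtain V0 where V0: "V0 \<in> B" "V0 \<subseteq> ?G" by (rule bexE)
      show "\<exists>W\<in>(\<lambda>V. {x \<in> topspace X. f x \<in> V}) ` B.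
          \<forall>U\<in>(\<lambda>V. {x \<in> topspace X. f x \<in> V}) ` B. U \<noteq> {} \<and> U \<subseteq> W \<longrightarrow> U \<inter> V \<noteq> {}"
      proof (intro bexI ballI impI)
        show "{x \<in> topspace X. f x \<in> V0} \<in> (\<lambda>V. {x \<in> topspace X. f x \<in> V}) ` B" using V0 by blast
      next
        fix U assume "U \<in> (\<lambda>V. {x \<in> topspace X. f x \<in> V}) ` B"
          and sub: "U \<noteq> {} \<and> U \<subseteq> {x \<in> topspace X. f x \<in> V0}"
        then obtain V' where V': "V' \<in> B" "U = {x \<in> topspace X. f x \<in> V'}" by blast
        have "V' \<subseteq> V0"
        proof
          fix y assume y: "y \<in> V'"
          have "V' \<subseteq> topspace Y" using Bop[OF V'(1)] openin_subset by blast
          then obtain x where "x \<in> topspace X" "f x = y" using surj y by force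
          then show "y \<in> V0" using sub V' y by auto
        qed
        then have s1: "V' \<subseteq> Y closure_of (f ` V)" using V0(2) interior_of_subset[of Y "Y closure_of (f ` V)"] by (meson order_trans)
        have "V' \<inter> Y closure_of (f ` V) \<noteq> {}" using s1 Bop[OF V'(1)] by auto
        then have "V' \<inter> f ` V \<noteq> {}"
          using openin_Int_closure_of_eq_empty[of Y V' "f ` V"] Bop[OF V'(1)] by simp
        then obtain x where "x \<in> V" "f x \<in> V'" by auto
        moreover have "x \<in> topspace X" using `x \<in> V` V openin_subset by blast
        ultimately show "U \<inter> V \<noteq> {}" using V' by blast
      qed
    qed
  }
qed

end
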